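(* Let $(z_n)_{n\ge0}$ be a homogeneous Markov chain on $\mathbb{Z}_+^k$ satisfying assumptions (A1) and (A2) below with maps $p_w:S_k\to[0,1]$, and let $\mathcal{F}_n$ be the $\sigma$-field generated by $z_0,\dots,z_n$. There exist sequences of random variables $(U_n)$ and $(b_n)$ in $\mathbb{R}^k$ adapted to $(\mathcal{F}_n)$, and a real number $K>0$, such that: (i) if $z_n\neq0$, then $$x_{n+1}-x_n=\frac1{|z_n|}\Big(\sum_{w}p_w(x_n)\big(w-x_n\alpha(w)\big)+U_{n+1}+b_{n+1}\Big);$$ (ii) $E[U_{n+1}\mid z_n]=0$; (iii) $\|U_n\|\le4m$ and $E[\|U_{n+1}\|^2\mid\mathcal{F}_n]\le4m^2$; (iv) $\|b_{n+1}\|\le\frac{K}{\max\{1,|z_n|\}}$.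
   Context: Fix integers $k\ge1$, $m\ge1$. For $w\in\mathbb{Z}^k$, $|w|=\sum_i|w^i|$, $\alpha(w)=\sum_iw^i$; the sum over $w$ ranges over $w\in\mathbb{Z}^k$ with $|w|\le m$. $\|\cdot\|$ is the Euclidean norm. $\mathbb{Z}_+^k=\{z\in\mathbb{Z}^k:z^i\ge0\}$, $S_k=\{x\in\mathbb{R}^k:x^i\ge0,\sum_ix^i=1\}$. $(z_n)$ has transition kernel $\Pi(z,z')=P[z_{n+1}=z'\mid z_n=z]$; $x_n=z_n/|z_n|$ if $z_n\ne0$, else $x_n=0$. (A1) $|z_{n+1}-z_n|\le m$ for all $n$. (A2) There exist Lipschitz maps $p_w:S_k\to[0,1]$ ($|w|\le m$) and $a>0$ with $|p_w(z/|z|)-\Pi(z,z+w)|\le a/|z|$ for all nonzero $z\in\mathbb{Z}_+^k$, $|w|\le m$. *)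

theory Defs
  imports "HOL-Analysis.Analysis" "HOL-Probability.Probability"
begin

definition l1norm :: "int ^ 'k \<Rightarrow> int" where
  "l1norm z = (\<Sum>i\<in>UNIV. \<bar>z $ i\<bar>)"

definition alpha :: "int ^ 'k \<Rightarrow> int" where
  "alpha w = (\<Sum>i\<in>UNIV. w $ i)"

definition Zplus :: "(int ^ 'k) set" where
  "Zplus = {z. \<forall>i. 0 \<le> z $ i}"

definition std_simplex :: "(real ^ 'k) set" where
  "std_simplex = {x. (\<forall>i. 0 \<le> x $ i) \<and> (\<Sum>i\<in>UNIV. x $ i) = 1}"

definition rvec :: "int ^ 'k \<Rightarrow> real ^ 'k" where
  "rvec z = (\<chi> i. real_of_int (z $ i))"

definition normalize_st :: "int ^ 'k \<Rightarrow> real ^ 'k" where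
  "normalize_st z = (if z = 0 then 0 else (1 / real_of_int (l1norm z)) *\<^sub>R rvec z)"

definition steps :: "nat \<Rightarrow> (int ^ 'k) set" where
  "steps m = {w. l1norm w \<le> int m}"

definition gen_filtration :: "'a measure \<Rightarrow> (nat \<Rightarrow> 'a \<Rightarrow> 'b) \<Rightarrow> nat \<Rightarrow> 'a measure" where
  "gen_filtration M z n = sigma (space M) (\<Union>i\<in>{..n}. {z i -` A \<inter> space M | A. True})"

end

theory Submission
  imports Defs
begin

definition Dv :: "int ^ 'k \<Rightarrow> int ^ 'k \<Rightarrow> real ^ 'k" where
  "Dv y y' = rvec (y' - y) - real_of_int (alpha (y' - y)) *\<^sub>R normalize_st y"

lemma finite_steps: "finite (steps m :: (int ^ 'k) set)"
proof -
  have "steps m \<subseteq> (\<lambda>f. vec_lambda f) ` (PiE UNIV (\<lambda>_::'k. {-int m..int m}))"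
  proof
    fix w :: "int ^ 'k" assume "w \<in> steps m"
    then have l: "(\<Sum>i\<in>UNIV. \<bar>w $ i\<bar>) \<le> int m" by (simp add: steps_def l1norm_def)
    have "\<bar>w $ i\<bar> \<le> int m" for i
      using member_le_sum[of i UNIV "\<lambda>i. \<bar>w $ i\<bar>"] l by auto
    then have "(\<lambda>i. w $ i) \<in> PiE UNIV (\<lambda>_::'k. {-int m..int m})"
      by (auto simp: PiE_UNIV_domain abs_le_iff minus_le_iff)
    then show "w \<in> (\<lambda>f. vec_lambda f) ` (PiE UNIV (\<lambda>_::'k. {-int m..int m}))"
      by (intro image_eqI[where x="\<lambda>i. w $ i"]) auto
  qed
  moreover have "finite ((\<lambda>f. vec_lambda f) ` (PiE UNIV (\<lambda>_::'k. {-int m..int m})))"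
    by (intro finite_imageI finite_PiE) auto
  ultimately show ?thesis by (rule finite_subset)
qed

lemma l1_nonneg: "0 \<le> l1norm z" by (simp add: l1norm_def sum_nonneg)

lemma l1_Zplus: "z \<in> Zplus \<Longrightarrow> l1norm z = alpha z"
  by (simp add: l1norm_def alpha_def Zplus_def)

lemma alpha_add: "alpha (x + y) = alpha x + alpha y"
  by (simp add: alpha_def sum.distrib)

lemma abs_alpha_le: "\<bar>alpha w\<bar> \<le> l1norm w"
  unfolding alpha_def l1norm_def by (rule sum_abs)

lemma norm_rvec: "norm (rvec w) \<le> real_of_int (l1norm w)"
  using norm_le_l1_cart[of "rvec w"] by (simp add: rvec_def l1norm_def)

lemma l1_pos: "z \<in> Zplus \<Longrightarrow> z \<noteq> 0 \<Longrightarrow> 0 < l1norm z"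
proof -
  assume z: "z \<in> Zplus" "z \<noteq> 0"
  then obtain i where "z $ i \<noteq> 0" by (auto simp: vec_eq_iff)
  then have "0 < \<bar>z $ i\<bar>" by auto
  also have "\<dots> \<le> l1norm z" unfolding l1norm_def by (rule member_le_sum) auto
  finally show ?thesis .
qed

lemma norm_normalize: "z \<in> Zplus \<Longrightarrow> norm (normalize_st z) \<le> 1"
proof (cases "z = 0")
  case False
  assume z: "z \<in> Zplus"
  have p: "0 < real_of_int (l1norm z)" using l1_pos[OF z False] by simp
  have "norm (normalize_st z) = norm (rvec z) / real_of_int (l1norm z)"
    using False p by (simp add: normalize_st_def)
  also have "\<dots> \<le> 1" using norm_rvec[of z] p by simp
  finally show ?thesis .
qed (simp add: normalize_st_def)

lemma norm_Dv: assumes "y \<in> Zplus" "w \<in> steps m" shows "norm (Dv y (y + w)) \<le> 2 * real m"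
proof -
  have w: "real_of_int (l1norm w) \<le> real m" using assms(2) by (simp add: steps_def)
  have "norm (Dv y (y + w)) \<le> norm (rvec w) + \<bar>real_of_int (alpha w)\<bar> * norm (normalize_st y)"
    unfolding Dv_def by (simp add: norm_triangle_ineq4[THEN order_trans])
  also have "\<dots> \<le> real m + real m * 1"
    apply (intro add_mono mult_mono norm_rvec[THEN order_trans] w norm_normalize assms(1))
    using abs_alpha_le[of w] w by auto
  finally show ?thesis by simp
qed


lemma alg_real0:
  fixes N t u v :: real
  assumes "N \<noteq> 0" "t \<noteq> 0"
  shows "N * ((u + v) / t - u / N) - (v - (t - N) * u / N) = - ((t - N) * (v - (t - N) * u / N) / t)"
  using assms by (simp add: field_simps)

lemma alg_real:
  fixes N a u v :: real
  assumes "0 < N" "0 < N + a"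
  shows "N * ((u + v) / (N + a) - u / N) - (v - a * u / N) = - (a * (v - a * u / N) / (N + a))"
  using alg_real0[of N "N + a" u v] assms by simp

lemma vec_alg: fixes Y W :: "real^'k" and N a :: real
  assumes "0 < N" "0 < N + a"
  shows "N *\<^sub>R ((1 / (N + a)) *\<^sub>R (Y + W) - (1 / N) *\<^sub>R Y) - (W - a *\<^sub>R (1 / N) *\<^sub>R Y)
       = (- a / (N + a)) *\<^sub>R (W - a *\<^sub>R (1 / N) *\<^sub>R Y)"
proof (unfold vec_eq_iff, intro allI)
  fix i
  have l: "(N *\<^sub>R ((1 / (N + a)) *\<^sub>R (Y + W) - (1 / N) *\<^sub>R Y) - (W - a *\<^sub>R (1 / N) *\<^sub>R Y)) $ i
          = N * ((Y $ i + W $ i) / (N + a) - Y $ i / N) - (W $ i - a * Y $ i / N)"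
    by (simp only: vector_minus_component vector_add_component vector_scaleR_component) simp
  have r: "((- a / (N + a)) *\<^sub>R (W - a *\<^sub>R (1 / N) *\<^sub>R Y)) $ i
          = - (a * (W $ i - a * Y $ i / N) / (N + a))"
    by (simp only: vector_minus_component vector_add_component vector_scaleR_component) simp
  show "(N *\<^sub>R ((1 / (N + a)) *\<^sub>R (Y + W) - (1 / N) *\<^sub>R Y) - (W - a *\<^sub>R (1 / N) *\<^sub>R Y)) $ i
       = ((- a / (N + a)) *\<^sub>R (W - a *\<^sub>R (1 / N) *\<^sub>R Y)) $ i"
    unfolding l r by (rule alg_real[OF assms])
qed

lemma geom:
  assumes y: "y \<in> Zplus" and y': "y' \<in> Zplus" and y0: "y \<noteq> 0" and st: "y' - y \<in> steps m"
  shows "norm (real_of_int (l1norm y) *\<^sub>R (normalize_st y' - normalize_st y) - Dv y y')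
          \<le> 2 * (real m)\<^sup>2 * (real m + 1) / real_of_int (l1norm y)"
proof -
  define w where "w = y' - y"
  have y'w: "y' = y + w" by (simp add: w_def)
  have wst: "w \<in> steps m" using st by (simp add: w_def)
  have wm: "real_of_int (l1norm w) \<le> real m" using wst by (simp add: steps_def)
  have am0: "real_of_int \<bar>alpha w\<bar> \<le> real_of_int (l1norm w)"
    using abs_alpha_le[of w] by (simp only: of_int_le_iff)
  have am: "\<bar>real_of_int (alpha w)\<bar> \<le> real m" using am0 wm by simp
  define N where "N = real_of_int (l1norm y)"
  have Npos: "0 < N" using l1_pos[OF y y0] by (simp add: N_def)
  have N'eq: "real_of_int (l1norm y') = N + real_of_int (alpha w)"
    using l1_Zplus[OF y] l1_Zplus[OF y'] by (simp add: N_def y'w alpha_add)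
  have R0: "0 \<le> 2 * (real m)\<^sup>2 * (real m + 1)" by simp
  show ?thesis
  proof (cases "y' = 0")
    case True
    have wy: "w = - y" using True by (simp add: w_def)
    have aw: "real_of_int (alpha w) = - N"
      using l1_Zplus[OF y] by (simp add: wy N_def alpha_def sum_negf)
    have l1w: "l1norm w = l1norm y" by (simp add: wy l1norm_def)
    have D0: "Dv y y' = 0"
      using Npos unfolding Dv_def
      by (simp add: True normalize_st_def y0 aw[unfolded wy] N_def[symmetric] vec_eq_iff rvec_def)
    have "norm (real_of_int (l1norm y) *\<^sub>R (normalize_st y' - normalize_st y) - Dv y y') = norm (rvec y)"
      using Npos by (simp only: D0) (simp add: True normalize_st_def y0 N_def[symmetric])
    also have "\<dots> \<le> N" using norm_rvec[of y] by (simp add: N_def)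
    also have "\<dots> \<le> real m * real m / N"
    proof -
      have "N \<le> real m" using wm l1w by (simp add: N_def)
      then have "N * N \<le> real m * real m" using Npos by (intro mult_mono) auto
      then show ?thesis using Npos by (simp add: field_simps)
    qed
    also have "\<dots> \<le> 2 * (real m)\<^sup>2 * (real m + 1) / N"
      using Npos by (intro divide_right_mono) (auto simp: power2_eq_square algebra_simps)
    finally show ?thesis by (simp add: N_def)
  next
    case False
    define N' where "N' = N + real_of_int (alpha w)"
    have N'pos: "0 < N'" using l1_pos[OF y' False] N'eq by (simp add: N'_def)
    have "1 \<le> N'" using l1_pos[OF y' False] N'eq by (simp add: N'_def)
    have eq: "real_of_int (l1norm y) *\<^sub>R (normalize_st y' - normalize_st y) - Dv y y'
           = (- real_of_int (alpha w) / N') *\<^sub>R Dv y y'"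
    proof -
      have x: "normalize_st y = (1/N) *\<^sub>R rvec y" by (simp add: normalize_st_def y0 N_def)
      have x'0: "normalize_st y' = (1/N') *\<^sub>R rvec y'"
        using N'eq False by (simp add: normalize_st_def N'_def)
      have r: "rvec y' = rvec y + rvec w" by (simp add: y'w rvec_def vec_eq_iff)
      have x': "normalize_st y' = (1/N') *\<^sub>R (rvec y + rvec w)" using x'0 r by simp
      have D: "Dv y y' = rvec w - real_of_int (alpha w) *\<^sub>R ((1/N) *\<^sub>R rvec y)"
        by (simp only: Dv_def w_def[symmetric] x)
      show ?thesis unfolding x x' D N_def[symmetric] N'_def
        by (rule vec_alg[OF Npos N'pos[unfolded N'_def]])
    qed
    have "norm (real_of_int (l1norm y) *\<^sub>R (normalize_st y' - normalize_st y) - Dv y y')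
        = \<bar>real_of_int (alpha w)\<bar> / N' * norm (Dv y y')" using N'pos by (simp add: eq)
    also have "\<dots> \<le> real m / N' * (2 * real m)"
      using norm_Dv[OF y wst] am N'pos y'w by (intro mult_mono divide_right_mono) auto
    also have "\<dots> \<le> 2 * (real m)\<^sup>2 * (real m + 1) / N"
    proof -
      have "N \<le> N' + real m" using am by (simp add: N'_def)
      also have "\<dots> \<le> N' * (real m + 1)"
        using mult_left_mono[OF \<open>1 \<le> N'\<close>, of "real m"] by (simp add: algebra_simps)
      finally have "N \<le> N' * (real m + 1)" .
      then have "real m * (2 * real m) * N \<le> real m * (2 * real m) * (N' * (real m + 1))"
        by (intro mult_left_mono) auto
      then show ?thesis using Npos N'pos by (simp add: field_simps power2_eq_square)
    qed
    finally show ?thesis by (simp add: N_def)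
  qed
qed

lemma var_bound:
  fixes q :: "'b \<Rightarrow> real" and d :: "'b \<Rightarrow> 'v::real_inner"
  assumes S: "finite S" and q0: "\<And>w. w \<in> S \<Longrightarrow> 0 \<le> q w" and q1: "sum q S \<le> 1"
    and dR: "\<And>w. w \<in> S \<Longrightarrow> norm (d w) \<le> R"
  shows "(\<Sum>w\<in>S. q w * (norm (d w - (\<Sum>v\<in>S. q v *\<^sub>R d v)))\<^sup>2) \<le> R\<^sup>2"
proof -
  define c where "c = (\<Sum>v\<in>S. q v *\<^sub>R d v)"
  have e: "(norm (d w - c))\<^sup>2 = (norm (d w))\<^sup>2 - 2 * inner (d w) c + (norm c)\<^sup>2" for w
    by (simp add: power2_norm_eq_inner inner_diff_left inner_diff_right inner_commute)
  have s1: "inner c c = (\<Sum>w\<in>S. q w * inner (d w) c)"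
    by (subst (1) c_def) (simp add: inner_sum_left)
  have "(\<Sum>w\<in>S. q w * (norm (d w - c))\<^sup>2)
      = (\<Sum>w\<in>S. q w * (norm (d w))\<^sup>2 - 2 * (q w * inner (d w) c) + q w * (norm c)\<^sup>2)"
    by (intro sum.cong) (auto simp: e algebra_simps)
  also have "\<dots> = (\<Sum>w\<in>S. q w * (norm (d w))\<^sup>2) - 2 * inner c c + sum q S * (norm c)\<^sup>2"
    by (simp add: s1 sum.distrib sum_subtractf sum_distrib_left sum_distrib_right)
  also have "\<dots> \<le> (\<Sum>w\<in>S. q w * (norm (d w))\<^sup>2)"
  proof -
    have "sum q S * (norm c)\<^sup>2 \<le> 1 * (norm c)\<^sup>2" using q1 by (intro mult_right_mono) auto
    then show ?thesis by (simp add: power2_norm_eq_inner) (use inner_ge_zero[of c] in linarith)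
  qed
  also have "\<dots> \<le> (\<Sum>w\<in>S. q w * R\<^sup>2)"
    using dR q0 by (intro sum_mono mult_left_mono power_mono) auto
  also have "\<dots> = sum q S * R\<^sup>2" by (simp add: sum_distrib_right)
  also have "\<dots> \<le> 1 * R\<^sup>2" using q1 by (intro mult_right_mono) auto
  finally show ?thesis by (simp add: c_def)
qed

lemma Pi_sum_le:
  fixes Pi :: "int ^ 'k \<Rightarrow> int ^ 'k \<Rightarrow> real"
  assumes kernel: "\<And>y. y \<in> Zplus \<Longrightarrow> (\<forall>y'. 0 \<le> Pi y y') \<and> (\<forall>y'. y' \<notin> Zplus \<longrightarrow> Pi y y' = 0)
                     \<and> (Pi y has_sum 1) Zplus"
    and y: "y \<in> Zplus" and S: "finite S"
  shows "(\<Sum>w\<in>S. Pi y (y + w)) \<le> 1"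
proof -
  have "(\<Sum>w\<in>S. Pi y (y + w)) = sum (Pi y) ((\<lambda>w. y + w) ` S)"
    by (subst sum.reindex) (auto simp: inj_on_def)
  also have "\<dots> \<le> 1"
  proof -
    have h: "(Pi y has_sum 1) Zplus" using kernel[OF y] by blast
    show ?thesis
      by (rule has_sum_mono_neutral[OF has_sum_finite h]) (use kernel[OF y] S in auto)
  qed
  finally show ?thesis .
qed


lemma meas2:
  fixes f :: "'c::countable \<Rightarrow> 'd::countable \<Rightarrow> 'e::topological_space"
  assumes g1: "g1 \<in> N \<rightarrow>\<^sub>M count_space UNIV" and g2: "g2 \<in> N \<rightarrow>\<^sub>M count_space UNIV"
  shows "(\<lambda>\<omega>. f (g1 \<omega>) (g2 \<omega>)) \<in> borel_measurable N"
proof (rule measurable_compose_countable[where f="\<lambda>i \<omega>. f i (g2 \<omega>)", OF _ g1])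
  fix i
  show "(\<lambda>\<omega>. f i (g2 \<omega>)) \<in> borel_measurable N"
    by (rule measurable_compose_countable[where f="\<lambda>j \<omega>. f i j", OF _ g2]) simp
qed

locale mc = prob_space M for M :: "'a measure" +
  fixes z :: "nat \<Rightarrow> 'a \<Rightarrow> int ^ 'k" and Pi :: "int ^ 'k \<Rightarrow> int ^ 'k \<Rightarrow> real" and m :: nat
  assumes meas: "\<And>n. z n \<in> M \<rightarrow>\<^sub>M count_space UNIV"
    and state: "\<And>n \<omega>. \<omega> \<in> space M \<Longrightarrow> z n \<omega> \<in> Zplus"
    and kernel: "\<And>y. y \<in> Zplus \<Longrightarrow> (\<forall>y'. 0 \<le> Pi y y') \<and> (\<forall>y'. y' \<notin> Zplus \<longrightarrow> Pi y y' = 0)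
                     \<and> (Pi y has_sum 1) Zplus"
    and markov: "\<And>n A y'. A \<in> sets (gen_filtration M z n) \<Longrightarrow>
        measure M (A \<inter> {\<omega> \<in> space M. z (Suc n) \<omega> = y'}) = (\<integral>\<omega>. indicator A \<omega> * Pi (z n \<omega>) y' \<partial>M)"
    and A1: "\<And>n \<omega>. \<omega> \<in> space M \<Longrightarrow> l1norm (z (Suc n) \<omega> - z n \<omega>) \<le> int m"
begin

definition G where "G n = (\<Union>i\<in>{..n}. {z i -` A \<inter> space M | A. True})"

lemma space_F[simp]: "space (gen_filtration M z n) = space M"
  by (simp add: gen_filtration_def space_measure_of_conv)

lemma sets_F: "sets (gen_filtration M z n) = sigma_sets (space M) (G n)"
  unfolding gen_filtration_def G_def by (rule sets_measure_of) auto

lemma G_in_M: "G n \<subseteq> sets M"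
  using measurable_sets[OF meas] by (auto simp: G_def)

lemma F_sub: "sets (gen_filtration M z n) \<subseteq> sets M"
  unfolding sets_F by (rule sets.sigma_sets_subset[OF G_in_M])

lemma G_F: "X \<in> G n \<Longrightarrow> X \<in> sets (gen_filtration M z n)"
  unfolding sets_F by (rule sigma_sets.Basic)

lemma z_meas_F: assumes "i \<le> n" shows "z i \<in> gen_filtration M z n \<rightarrow>\<^sub>M count_space UNIV"
proof (rule measurableI)
  fix A :: "(int ^ 'k) set"
  have "z i -` A \<inter> space M \<in> G n" using assms unfolding G_def by blast
  then show "z i -` A \<inter> space (gen_filtration M z n) \<in> sets (gen_filtration M z n)"
    using G_F by simp
qed simp

lemma ev_F: "{\<omega> \<in> space M. P (z n \<omega>)} \<in> sets (gen_filtration M z n)"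
proof -
  have "{\<omega> \<in> space M. P (z n \<omega>)} = z n -` {v. P v} \<inter> space M" by auto
  also have "\<dots> \<in> G n" unfolding G_def by blast
  finally show ?thesis by (rule G_F)
qed

lemma sub_F: "subalgebra M (gen_filtration M z n)"
  using F_sub by (simp add: subalgebra_def)

lemma sfs_F: "sigma_finite_subalgebra M (gen_filtration M z n)"
  by (rule finite_measure_subalgebra_is_sigma_finite)
     (simp add: finite_measure_subalgebra_def finite_measure_subalgebra_axioms_def sub_F finite_measure_axioms)

definition V where "V n = vimage_algebra (space M) (z n) (count_space UNIV)"

lemma V_sub_F: "sets (V n) \<subseteq> sets (gen_filtration M z n)"
proof
  fix X assume "X \<in> sets (V n)"
  then have "X \<in> G n" unfolding V_def by (subst (asm) sets_vimage_algebra2) (auto simp: G_def)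
  then show "X \<in> sets (gen_filtration M z n)" by (rule G_F)
qed

lemma sfs_V: "sigma_finite_subalgebra M (V n)"
  by (rule finite_measure_subalgebra_is_sigma_finite)
     (use V_sub_F F_sub in \<open>auto simp: finite_measure_subalgebra_def finite_measure_subalgebra_axioms_def
          subalgebra_def finite_measure_axioms V_def\<close>)

lemma zM: "(\<lambda>\<omega>. f (z i \<omega>) (z j \<omega>)) \<in> borel_measurable M"
  by (rule meas2[OF meas meas])

lemma step_in: "\<omega> \<in> space M \<Longrightarrow> z (Suc n) \<omega> - z n \<omega> \<in> steps m"
  using A1 by (simp add: steps_def)

lemma zero_steps: "0 \<in> steps m" by (simp add: steps_def l1norm_def)
lemma zero_Zplus: "0 \<in> Zplus" by (simp add: Zplus_def)

lemma Pi_nonneg: "y \<in> Zplus \<Longrightarrow> 0 \<le> Pi y y'" using kernel by blast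

lemma step1:
  assumes B: "B \<in> sets (gen_filtration M z n)" and By: "B \<subseteq> {\<omega> \<in> space M. z n \<omega> = y}"
  shows "(\<integral>\<omega>. indicator B \<omega> * h (z n \<omega>) (z (Suc n) \<omega>) \<partial>M)
       = (\<integral>\<omega>. indicator B \<omega> * (\<Sum>w\<in>steps m. Pi (z n \<omega>) (z n \<omega> + w) * h (z n \<omega>) (z n \<omega> + w)) \<partial>M)"
proof -
  have BM: "B \<in> sets M" using B F_sub by auto
  define E where "E w = B \<inter> {\<omega> \<in> space M. z (Suc n) \<omega> = y + w}" for w
  have EM: "E w \<in> sets M" for w
  proof -
    have "{\<omega> \<in> space M. z (Suc n) \<omega> = y + w} \<in> sets M"
      using measurable_sets[OF meas, of "{y + w}" "Suc n"] by (simp add: vimage_def Int_def conj_commute)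
    then show ?thesis using BM by (simp add: E_def)
  qed
  have p1: "indicator B \<omega> * h (z n \<omega>) (z (Suc n) \<omega>) = (\<Sum>w\<in>steps m. h y (y + w) * indicator (E w) \<omega>)"
    if \<omega>: "\<omega> \<in> space M" for \<omega>
  proof (cases "\<omega> \<in> B")
    case False
    then show ?thesis by (simp add: E_def)
  next
    case True
    then have zy: "z n \<omega> = y" using By by auto
    define w0 where "w0 = z (Suc n) \<omega> - y"
    have w0: "w0 \<in> steps m" using step_in[OF \<omega>, of n] zy by (simp add: w0_def)
    have "indicator (E w) \<omega> = (if w = w0 then 1 else (0::real))" for w
      using True \<omega> by (auto simp: E_def w0_def indicator_def)
    then have "(\<Sum>w\<in>steps m. h y (y + w) * indicator (E w) \<omega>) = (\<Sum>w\<in>steps m. if w = w0 then h y (y + w) else 0)"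
      by (intro sum.cong) auto
    also have "\<dots> = h y (y + w0)" using w0 by (simp add: sum.delta finite_steps)
    finally show ?thesis using True zy by (simp add: w0_def)
  qed
  have "(\<integral>\<omega>. indicator B \<omega> * h (z n \<omega>) (z (Suc n) \<omega>) \<partial>M)
      = (\<integral>\<omega>. (\<Sum>w\<in>steps m. h y (y + w) * indicator (E w) \<omega>) \<partial>M)"
    by (rule Bochner_Integration.integral_cong[OF refl]) (auto simp: p1)
  also have "\<dots> = (\<Sum>w\<in>steps m. h y (y + w) * measure M (E w))"
    using EM by (subst Bochner_Integration.integral_sum) (auto simp: finite_steps less_top[symmetric])
  also have "\<dots> = (\<Sum>w\<in>steps m. h y (y + w) * (Pi y (y + w) * measure M B))"
  proof (intro sum.cong refl)
    fix w
    have "measure M (E w) = (\<integral>\<omega>. indicator B \<omega> * Pi (z n \<omega>) (y + w) \<partial>M)"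
      unfolding E_def by (rule markov[OF B])
    also have "\<dots> = (\<integral>\<omega>. Pi y (y + w) * indicator B \<omega> \<partial>M)"
      by (rule Bochner_Integration.integral_cong[OF refl]) (use By in \<open>auto simp: indicator_def\<close>)
    also have "\<dots> = Pi y (y + w) * measure M B" using BM by simp
    finally show "h y (y + w) * measure M (E w) = h y (y + w) * (Pi y (y + w) * measure M B)" by simp
  qed
  also have "\<dots> = (\<Sum>w\<in>steps m. Pi y (y + w) * h y (y + w)) * measure M B"
    by (simp add: sum_distrib_right mult_ac sum_distrib_left[symmetric])
  also have "\<dots> = (\<integral>\<omega>. (\<Sum>w\<in>steps m. Pi y (y + w) * h y (y + w)) * indicator B \<omega> \<partial>M)"
  proof -
    have "B \<inter> space M = B" using sets.sets_into_space[OF BM] by auto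
    then show ?thesis by (simp only: integral_mult_right_zero integral_indicator) simp
  qed
  also have "\<dots> = (\<integral>\<omega>. indicator B \<omega> * (\<Sum>w\<in>steps m. Pi (z n \<omega>) (z n \<omega> + w) * h (z n \<omega>) (z n \<omega> + w)) \<partial>M)"
    by (rule Bochner_Integration.integral_cong[OF refl]) (use By in \<open>auto simp: indicator_def\<close>)
  finally show ?thesis .
qed


lemma intg: "f \<in> borel_measurable M \<Longrightarrow> (\<And>\<omega>. \<omega> \<in> space M \<Longrightarrow> \<bar>f \<omega>\<bar> \<le> (D::real)) \<Longrightarrow> integrable M f"
  by (rule integrable_const_bound[where B=D]) auto

lemma key:
  assumes A: "A \<in> sets (gen_filtration M z n)"
    and hb: "\<And>y w. y \<in> Zplus \<Longrightarrow> w \<in> steps m \<Longrightarrow> \<bar>h y (y + w)\<bar> \<le> C"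
  shows "(\<integral>\<omega>. indicator A \<omega> * h (z n \<omega>) (z (Suc n) \<omega>) \<partial>M)
       = (\<integral>\<omega>. indicator A \<omega> * (\<Sum>w\<in>steps m. Pi (z n \<omega>) (z n \<omega> + w) * h (z n \<omega>) (z n \<omega> + w)) \<partial>M)"
proof -
  define S where "S \<omega> = (\<Sum>w\<in>steps m. Pi (z n \<omega>) (z n \<omega> + w) * h (z n \<omega>) (z n \<omega> + w))" for \<omega>
  define H where "H \<omega> = h (z n \<omega>) (z (Suc n) \<omega>)" for \<omega>
  define Gf where "Gf \<omega> = H \<omega> - S \<omega>" for \<omega>
  have C0: "0 \<le> C" using hb[OF zero_Zplus zero_steps] by linarith
  have hbd: "\<bar>H \<omega>\<bar> \<le> C" if "\<omega> \<in> space M" for \<omega>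
    using hb[OF state[OF that, of n] step_in[OF that, of n]] by (simp add: H_def)
  have Sbd: "\<bar>S \<omega>\<bar> \<le> C" if "\<omega> \<in> space M" for \<omega>
  proof -
    have y: "z n \<omega> \<in> Zplus" using state that .
    have "\<bar>S \<omega>\<bar> \<le> (\<Sum>w\<in>steps m. \<bar>Pi (z n \<omega>) (z n \<omega> + w) * h (z n \<omega>) (z n \<omega> + w)\<bar>)"
      unfolding S_def by (rule sum_abs)
    also have "\<dots> \<le> (\<Sum>w\<in>steps m. Pi (z n \<omega>) (z n \<omega> + w) * C)"
      by (intro sum_mono) (auto simp: abs_mult Pi_nonneg[OF y] intro!: mult_left_mono hb[OF y])
    also have "\<dots> = (\<Sum>w\<in>steps m. Pi (z n \<omega>) (z n \<omega> + w)) * C" by (simp add: sum_distrib_right)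
    also have "\<dots> \<le> 1 * C" by (intro mult_right_mono Pi_sum_le[OF kernel y finite_steps] C0)
    finally show ?thesis by simp
  qed
  have HM: "H \<in> borel_measurable M" unfolding H_def by (rule zM)
  have SM: "S \<in> borel_measurable M"
    unfolding S_def[abs_def] using zM[of "\<lambda>y _. \<Sum>w\<in>steps m. Pi y (y + w) * h y (y + w)" n n] by simp
  have AM: "A \<in> sets M" using A F_sub by auto
  have intH: "integrable M (\<lambda>\<omega>. indicator B \<omega> * H \<omega>)" if "B \<in> sets M" for B
    by (rule intg[where D=C]) (use HM that hbd C0 in \<open>auto simp: indicator_def\<close>)
  have intS: "integrable M (\<lambda>\<omega>. indicator B \<omega> * S \<omega>)" if "B \<in> sets M" for B
    by (rule intg[where D=C]) (use SM that Sbd C0 in \<open>auto simp: indicator_def\<close>)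
  have GM: "Gf \<in> borel_measurable M" unfolding Gf_def using HM SM by measurable
  have Gbd: "\<bar>Gf \<omega>\<bar> \<le> 2 * C" if "\<omega> \<in> space M" for \<omega>
    using hbd[OF that] Sbd[OF that] by (simp add: Gf_def abs_le_iff)
  have splitG: "(\<integral>\<omega>. indicator B \<omega> * Gf \<omega> \<partial>M)
      = (\<integral>\<omega>. indicator B \<omega> * H \<omega> \<partial>M) - (\<integral>\<omega>. indicator B \<omega> * S \<omega> \<partial>M)" if "B \<in> sets M" for B
    unfolding Gf_def right_diff_distrib by (rule Bochner_Integration.integral_diff[OF intH[OF that] intS[OF that]])
  have zero_y: "(\<integral>\<omega>. indicator (A \<inter> {\<omega> \<in> space M. z n \<omega> = y}) \<omega> * Gf \<omega> \<partial>M) = 0" for y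
  proof -
    have B: "A \<inter> {\<omega> \<in> space M. z n \<omega> = y} \<in> sets (gen_filtration M z n)"
      using A ev_F[of "\<lambda>v. v = y" n] by auto
    have BM: "A \<inter> {\<omega> \<in> space M. z n \<omega> = y} \<in> sets M" using B F_sub by auto
    show ?thesis using step1[OF B, of y h] BM by (simp add: splitG H_def S_def)
  qed
  have zero_K: "(\<integral>\<omega>. indicator (A \<inter> {\<omega> \<in> space M. l1norm (z n \<omega>) \<le> int K}) \<omega> * Gf \<omega> \<partial>M) = 0" for K :: nat
  proof -
    define YK :: "(int ^ 'k) set" where "YK = {y \<in> Zplus. l1norm y \<le> int K}"
    have fin: "finite YK" by (rule finite_subset[OF _ finite_steps[of K]]) (auto simp: YK_def steps_def)
    have eq: "indicator (A \<inter> {\<omega> \<in> space M. l1norm (z n \<omega>) \<le> int K}) \<omega> * Gf \<omega>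
        = (\<Sum>y\<in>YK. indicator (A \<inter> {\<omega> \<in> space M. z n \<omega> = y}) \<omega> * Gf \<omega>)" if \<omega>: "\<omega> \<in> space M" for \<omega>
    proof -
      have "(\<Sum>y\<in>YK. indicator (A \<inter> {\<omega> \<in> space M. z n \<omega> = y}) \<omega> * Gf \<omega>)
          = (\<Sum>y\<in>YK. if z n \<omega> = y then indicator A \<omega> * Gf \<omega> else 0)"
        using \<omega> by (intro sum.cong) (auto simp: indicator_def)
      also have "\<dots> = (if z n \<omega> \<in> YK then indicator A \<omega> * Gf \<omega> else 0)"
        using fin by (simp add: sum.delta)
      also have "\<dots> = indicator (A \<inter> {\<omega> \<in> space M. l1norm (z n \<omega>) \<le> int K}) \<omega> * Gf \<omega>"
        using \<omega> state[OF \<omega>, of n] by (auto simp: YK_def indicator_def)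
      finally show ?thesis by simp
    qed
    have "(\<integral>\<omega>. indicator (A \<inter> {\<omega> \<in> space M. l1norm (z n \<omega>) \<le> int K}) \<omega> * Gf \<omega> \<partial>M)
        = (\<integral>\<omega>. (\<Sum>y\<in>YK. indicator (A \<inter> {\<omega> \<in> space M. z n \<omega> = y}) \<omega> * Gf \<omega>) \<partial>M)"
      by (rule Bochner_Integration.integral_cong[OF refl]) (rule eq)
    also have "\<dots> = (\<Sum>y\<in>YK. (\<integral>\<omega>. indicator (A \<inter> {\<omega> \<in> space M. z n \<omega> = y}) \<omega> * Gf \<omega> \<partial>M))"
    proof (rule Bochner_Integration.integral_sum)
      fix y
      have BM: "A \<inter> {\<omega> \<in> space M. z n \<omega> = y} \<in> sets M"
        using A ev_F[of "\<lambda>v. v = y" n] F_sub by auto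
      show "integrable M (\<lambda>\<omega>. indicator (A \<inter> {\<omega> \<in> space M. z n \<omega> = y}) \<omega> * Gf \<omega>)"
      proof (rule intg[where D="2*C"])
        show "(\<lambda>\<omega>. indicator (A \<inter> {\<omega> \<in> space M. z n \<omega> = y}) \<omega> * Gf \<omega>) \<in> borel_measurable M"
          using GM BM by measurable
      qed (use Gbd C0 in \<open>auto simp: indicator_def\<close>)
    qed
    also have "\<dots> = 0" by (simp add: zero_y)
    finally show ?thesis .
  qed
  define s where "s K \<omega> = indicator (A \<inter> {\<omega> \<in> space M. l1norm (z n \<omega>) \<le> int K}) \<omega> * Gf \<omega>" for K :: nat and \<omega>
  have "(\<lambda>K. integral\<^sup>L M (s K)) \<longlonglongrightarrow> (\<integral>\<omega>. indicator A \<omega> * Gf \<omega> \<partial>M)"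
  proof (rule integral_dominated_convergence[where w="\<lambda>_. 2 * C"])
    show "(\<lambda>\<omega>. indicator A \<omega> * Gf \<omega>) \<in> borel_measurable M" using AM GM by measurable
    show "s K \<in> borel_measurable M" for K
    proof -
      have "A \<inter> {\<omega> \<in> space M. l1norm (z n \<omega>) \<le> int K} \<in> sets M"
        using A ev_F[of "\<lambda>v. l1norm v \<le> int K" n] F_sub by auto
      then show ?thesis unfolding s_def using GM by measurable
    qed
    show "integrable M (\<lambda>_. 2 * C)" by simp
    show "AE \<omega> in M. (\<lambda>K. s K \<omega>) \<longlonglongrightarrow> indicator A \<omega> * Gf \<omega>"
    proof (rule AE_I2)
      fix \<omega> assume \<omega>: "\<omega> \<in> space M"
      have "eventually (\<lambda>K. s K \<omega> = indicator A \<omega> * Gf \<omega>) sequentially"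
        unfolding eventually_sequentially
        by (rule exI[where x="nat (l1norm (z n \<omega>))"]) (use \<omega> in \<open>auto simp: s_def indicator_def\<close>)
      then show "(\<lambda>K. s K \<omega>) \<longlonglongrightarrow> indicator A \<omega> * Gf \<omega>" by (rule tendsto_eventually)
    qed
    show "AE \<omega> in M. norm (s K \<omega>) \<le> 2 * C" for K
      by (rule AE_I2) (use Gbd C0 in \<open>auto simp: s_def indicator_def\<close>)
  qed
  moreover have "integral\<^sup>L M (s K) = 0" for K unfolding s_def by (rule zero_K)
  ultimately have "(\<integral>\<omega>. indicator A \<omega> * Gf \<omega> \<partial>M) = 0"
    by (simp add: LIMSEQ_const_iff)
  then show ?thesis using splitG[OF AM] by (simp add: H_def S_def)
qed


lemma Pi_sum: assumes "y \<in> Zplus" shows "(\<Sum>w\<in>steps m. Pi y (y + w)) \<le> 1"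
  by (rule Pi_sum_le[where Pi=Pi and S="steps m"]) (use kernel assms finite_steps in blast)+

lemma Sone: "AE \<omega> in M. (\<Sum>w\<in>steps m. Pi (z n \<omega>) (z n \<omega> + w)) = 1"
proof -
  define S where "S \<omega> = (\<Sum>w\<in>steps m. Pi (z n \<omega>) (z n \<omega> + w))" for \<omega>
  have top: "space M \<in> sets (gen_filtration M z n)" using sets.top[of "gen_filtration M z n"] by simp
  have k: "(\<integral>\<omega>. indicator (space M) \<omega> * (\<lambda>_ _. 1::real) (z n \<omega>) (z (Suc n) \<omega>) \<partial>M)
     = (\<integral>\<omega>. indicator (space M) \<omega> * (\<Sum>w\<in>steps m. Pi (z n \<omega>) (z n \<omega> + w) * (\<lambda>_ _. 1::real) (z n \<omega>) (z n \<omega> + w)) \<partial>M)"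
    by (rule key[OF top, where C=1]) simp
  have e1: "(\<integral>\<omega>. indicator (space M) \<omega> * (\<lambda>_ _. 1::real) (z n \<omega>) (z (Suc n) \<omega>) \<partial>M) = 1"
    by (simp add: prob_space)
  have e2: "(\<integral>\<omega>. indicator (space M) \<omega> * (\<Sum>w\<in>steps m. Pi (z n \<omega>) (z n \<omega> + w) * (\<lambda>_ _. 1::real) (z n \<omega>) (z n \<omega> + w)) \<partial>M)
      = integral\<^sup>L M S"
    by (rule Bochner_Integration.integral_cong[OF refl]) (simp add: S_def)
  have SM: "S \<in> borel_measurable M"
    unfolding S_def[abs_def] using zM[of "\<lambda>y _. \<Sum>w\<in>steps m. Pi y (y + w)" n n] by simp
  have S01: "0 \<le> S \<omega> \<and> S \<omega> \<le> 1" if "\<omega> \<in> space M" for \<omega>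
    using Pi_sum_le[OF kernel state[OF that, of n] finite_steps] Pi_nonneg[OF state[OF that, of n]]
    by (auto simp: S_def intro!: sum_nonneg)
  have intS: "integrable M S" by (rule intg[where D=1]) (use SM S01 in auto)
  have "integral\<^sup>L M S = 1" using k e1 e2 by simp
  then have "(\<integral>\<omega>. 1 - S \<omega> \<partial>M) = 0"
    by (subst Bochner_Integration.integral_diff) (use intS in \<open>auto simp: prob_space\<close>)
  moreover have "integrable M (\<lambda>\<omega>. 1 - S \<omega>)" using intS by auto
  ultimately have "AE \<omega> in M. 1 - S \<omega> = 0"
    using integral_nonneg_eq_0_iff_AE[of M "\<lambda>\<omega>. 1 - S \<omega>"] S01 by (auto intro!: AE_I2)
  then show ?thesis by (auto simp: S_def)
qed

definition cv where "cv y = (\<Sum>w\<in>steps m. Pi y (y + w) *\<^sub>R Dv y (y + w))"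
definition Uf where "Uf y y' = Dv y y' - cv y"

lemma cv_bd: assumes y: "y \<in> Zplus" shows "norm (cv y) \<le> 2 * real m"
proof -
  have "norm (cv y) \<le> (\<Sum>w\<in>steps m. norm (Pi y (y + w) *\<^sub>R Dv y (y + w)))"
    unfolding cv_def by (rule norm_sum)
  also have "\<dots> \<le> (\<Sum>w\<in>steps m. Pi y (y + w) * (2 * real m))"
    using Pi_nonneg[OF y] norm_Dv[OF y] by (intro sum_mono) (auto intro!: mult_left_mono)
  also have "\<dots> = (\<Sum>w\<in>steps m. Pi y (y + w)) * (2 * real m)" by (simp add: sum_distrib_right)
  also have "\<dots> \<le> 1 * (2 * real m)"
    by (intro mult_right_mono Pi_sum_le[OF kernel y finite_steps]) auto
  finally show ?thesis by simp
qed

lemma Uf_bd: assumes y: "y \<in> Zplus" and w: "w \<in> steps m" shows "norm (Uf y (y + w)) \<le> 4 * real m"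
proof -
  have "norm (Uf y (y + w)) \<le> norm (Dv y (y + w)) + norm (cv y)" unfolding Uf_def by (rule norm_triangle_ineq4)
  also have "\<dots> \<le> 2 * real m + 2 * real m" by (intro add_mono norm_Dv cv_bd y w)
  finally show ?thesis by simp
qed

lemma Uf_meas_F: "(\<lambda>\<omega>. f (z n \<omega>) (z (Suc n) \<omega>)) \<in> borel_measurable (gen_filtration M z (Suc n))"
  by (rule meas2[OF z_meas_F z_meas_F]) auto

lemma condexp_U: "AE \<omega> in M. real_cond_exp M (V n) (\<lambda>\<omega>. Uf (z n \<omega>) (z (Suc n) \<omega>) $ i) \<omega> = 0"
proof (rule sigma_finite_subalgebra.real_cond_exp_charact[OF sfs_V, where g="\<lambda>_. 0"])
  have bd: "\<bar>Uf y (y + w) $ i\<bar> \<le> 4 * real m" if "y \<in> Zplus" "w \<in> steps m" for y w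
    using component_le_norm_cart[of "Uf y (y + w)" i] Uf_bd[OF that] by linarith
  show "integrable M (\<lambda>\<omega>. Uf (z n \<omega>) (z (Suc n) \<omega>) $ i)"
  proof (rule intg[where D="4 * real m"])
    show "(\<lambda>\<omega>. Uf (z n \<omega>) (z (Suc n) \<omega>) $ i) \<in> borel_measurable M" by (rule zM)
    fix \<omega> assume \<omega>: "\<omega> \<in> space M"
    show "\<bar>Uf (z n \<omega>) (z (Suc n) \<omega>) $ i\<bar> \<le> 4 * real m"
      using bd[OF state[OF \<omega>, of n] step_in[OF \<omega>, of n]] by simp
  qed
  show "integrable M (\<lambda>_. 0::real)" by simp
  show "(\<lambda>_. 0::real) \<in> borel_measurable (V n)" by simp
  fix A assume A: "A \<in> sets (V n)"
  then have AF: "A \<in> sets (gen_filtration M z n)" using V_sub_F by auto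
  have "(\<integral>\<omega>. indicator A \<omega> * (\<lambda>y y'. Uf y y' $ i) (z n \<omega>) (z (Suc n) \<omega>) \<partial>M)
     = (\<integral>\<omega>. indicator A \<omega> * (\<Sum>w\<in>steps m. Pi (z n \<omega>) (z n \<omega> + w) * (\<lambda>y y'. Uf y y' $ i) (z n \<omega>) (z n \<omega> + w)) \<partial>M)"
    by (rule key[OF AF]) (rule bd)
  also have "\<dots> = 0"
  proof (rule integral_eq_zero_AE)
    show "AE \<omega> in M. indicator A \<omega> * (\<Sum>w\<in>steps m. Pi (z n \<omega>) (z n \<omega> + w) * (\<lambda>y y'. Uf y y' $ i) (z n \<omega>) (z n \<omega> + w)) = 0"
      using Sone[of n]
    proof eventually_elim
      case (elim \<omega>)
      have "(\<Sum>w\<in>steps m. Pi (z n \<omega>) (z n \<omega> + w) * (Uf (z n \<omega>) (z n \<omega> + w) $ i))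
          = (\<Sum>w\<in>steps m. Pi (z n \<omega>) (z n \<omega> + w) * (Dv (z n \<omega>) (z n \<omega> + w) $ i))
            - (\<Sum>w\<in>steps m. Pi (z n \<omega>) (z n \<omega> + w)) * (cv (z n \<omega>) $ i)"
        by (simp add: Uf_def right_diff_distrib sum_subtractf sum_distrib_right)
      also have "\<dots> = 0" using elim by (simp add: cv_def)
      finally show ?case by simp
    qed
  qed
  finally show "(\<integral>\<omega>\<in>A. Uf (z n \<omega>) (z (Suc n) \<omega>) $ i \<partial>M) = (\<integral>\<omega>\<in>A. 0 \<partial>M)"
    by (simp add: set_lebesgue_integral_def)
qed

lemma condexp_U2: "AE \<omega> in M. real_cond_exp M (gen_filtration M z n) (\<lambda>\<omega>. (norm (Uf (z n \<omega>) (z (Suc n) \<omega>)))\<^sup>2) \<omega> \<le> 4 * (real m)\<^sup>2"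
proof -
  define g where "g \<omega> = (\<Sum>w\<in>steps m. Pi (z n \<omega>) (z n \<omega> + w) * (\<lambda>y y'. (norm (Uf y y'))\<^sup>2) (z n \<omega>) (z n \<omega> + w))" for \<omega>
  have bd: "\<bar>(\<lambda>y y'. (norm (Uf y y'))\<^sup>2) y (y + w)\<bar> \<le> (4 * real m)\<^sup>2" if "y \<in> Zplus" "w \<in> steps m" for y w
  proof -
    have "(norm (Uf y (y+w)))\<^sup>2 \<le> (4 * real m)\<^sup>2" by (rule power_mono[OF Uf_bd[OF that] norm_ge_zero])
    then show ?thesis by simp
  qed
  have gle: "g \<omega> \<le> 4 * (real m)\<^sup>2" if \<omega>: "\<omega> \<in> space M" for \<omega>
  proof -
    have y: "z n \<omega> \<in> Zplus" using state[OF \<omega>] .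
    have "(\<Sum>w\<in>steps m. Pi (z n \<omega>) (z n \<omega> + w) * (norm (Dv (z n \<omega>) (z n \<omega> + w)
            - (\<Sum>v\<in>steps m. Pi (z n \<omega>) (z n \<omega> + v) *\<^sub>R Dv (z n \<omega>) (z n \<omega> + v))))\<^sup>2) \<le> (2 * real m)\<^sup>2"
      by (rule var_bound) (auto simp: finite_steps Pi_nonneg[OF y] Pi_sum[OF y] norm_Dv[OF y])
    then have "g \<omega> \<le> (2 * real m)\<^sup>2" by (simp add: g_def Uf_def cv_def)
    then show ?thesis by (simp add: power2_eq_square)
  qed
  have gbd: "\<bar>g \<omega>\<bar> \<le> (4 * real m)\<^sup>2" if \<omega>: "\<omega> \<in> space M" for \<omega>
  proof -
    have y: "z n \<omega> \<in> Zplus" using state[OF \<omega>] .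
    have "0 \<le> g \<omega>" unfolding g_def using Pi_nonneg[OF y] by (auto intro!: sum_nonneg)
    then show ?thesis using gle[OF \<omega>] by (simp add: power2_eq_square)
  qed
  have "AE \<omega> in M. real_cond_exp M (gen_filtration M z n) (\<lambda>\<omega>. (norm (Uf (z n \<omega>) (z (Suc n) \<omega>)))\<^sup>2) \<omega> = g \<omega>"
  proof (rule sigma_finite_subalgebra.real_cond_exp_charact[OF sfs_F])
    show "integrable M (\<lambda>\<omega>. (norm (Uf (z n \<omega>) (z (Suc n) \<omega>)))\<^sup>2)"
    proof (rule intg[where D="(4 * real m)\<^sup>2"])
      show "(\<lambda>\<omega>. (norm (Uf (z n \<omega>) (z (Suc n) \<omega>)))\<^sup>2) \<in> borel_measurable M" by (rule zM)
      fix \<omega> assume \<omega>: "\<omega> \<in> space M"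
      show "\<bar>(norm (Uf (z n \<omega>) (z (Suc n) \<omega>)))\<^sup>2\<bar> \<le> (4 * real m)\<^sup>2"
        using bd[OF state[OF \<omega>, of n] step_in[OF \<omega>, of n]] by simp
    qed
    have gF: "g \<in> borel_measurable (gen_filtration M z n)"
      unfolding g_def[abs_def]
      using meas2[OF z_meas_F[of n n] z_meas_F[of n n], of "\<lambda>y _. \<Sum>w\<in>steps m. Pi y (y + w) * (norm (Uf y (y + w)))\<^sup>2"]
      by simp
    then show "g \<in> borel_measurable (gen_filtration M z n)" .
    have "g \<in> borel_measurable M" using gF F_sub by (metis measurable_from_subalg sub_F)
    then show "integrable M g" by (rule intg[where D="(4 * real m)\<^sup>2"]) (rule gbd)
    fix A assume A: "A \<in> sets (gen_filtration M z n)"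
    have "(\<integral>\<omega>. indicator A \<omega> * (\<lambda>y y'. (norm (Uf y y'))\<^sup>2) (z n \<omega>) (z (Suc n) \<omega>) \<partial>M)
       = (\<integral>\<omega>. indicator A \<omega> * g \<omega> \<partial>M)"
      unfolding g_def by (rule key[OF A]) (rule bd)
    then show "(\<integral>\<omega>\<in>A. (norm (Uf (z n \<omega>) (z (Suc n) \<omega>)))\<^sup>2 \<partial>M) = (\<integral>\<omega>\<in>A. g \<omega> \<partial>M)"
      by (simp add: set_lebesgue_integral_def)
  qed
  then show ?thesis
  proof (rule AE_mp)
    show "AE \<omega> in M. real_cond_exp M (gen_filtration M z n) (\<lambda>\<omega>. (norm (Uf (z n \<omega>) (z (Suc n) \<omega>)))\<^sup>2) \<omega> = g \<omega> \<longrightarrow>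
       real_cond_exp M (gen_filtration M z n) (\<lambda>\<omega>. (norm (Uf (z n \<omega>) (z (Suc n) \<omega>)))\<^sup>2) \<omega> \<le> 4 * (real m)\<^sup>2"
      by (rule AE_I2) (use gle in auto)
  qed
qed


lemma b_bd:
  fixes p :: "int ^ 'k \<Rightarrow> real ^ 'k \<Rightarrow> real" and a :: real
  assumes A2: "\<And>y w. y \<in> Zplus \<Longrightarrow> y \<noteq> 0 \<Longrightarrow> w \<in> steps m \<Longrightarrow>
        \<bar>p w (normalize_st y) - Pi y (y + w)\<bar> \<le> a / real_of_int (l1norm y)"
    and y: "y \<in> Zplus" and y0: "y \<noteq> 0" and y': "y' \<in> Zplus" and st: "y' - y \<in> steps m"
  shows "norm (real_of_int (l1norm y) *\<^sub>R (normalize_st y' - normalize_st y)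
          - (\<Sum>w\<in>steps m. p w (normalize_st y) *\<^sub>R (rvec w - real_of_int (alpha w) *\<^sub>R normalize_st y))
          - Uf y y')
        \<le> (2 * (real m)\<^sup>2 * (real m + 1) + real (card (steps m :: (int ^ 'k) set)) * (2 * real m) * a) / real_of_int (l1norm y)"
proof -
  define N where "N = real_of_int (l1norm y)"
  have Npos: "0 < N" using l1_pos[OF y y0] by (simp add: N_def)
  have Dvw: "Dv y (y + w) = rvec w - real_of_int (alpha w) *\<^sub>R normalize_st y" for w
    by (simp add: Dv_def)
  have eq: "real_of_int (l1norm y) *\<^sub>R (normalize_st y' - normalize_st y)
          - (\<Sum>w\<in>steps m. p w (normalize_st y) *\<^sub>R (rvec w - real_of_int (alpha w) *\<^sub>R normalize_st y))
          - Uf y y'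
      = (real_of_int (l1norm y) *\<^sub>R (normalize_st y' - normalize_st y) - Dv y y')
        + (\<Sum>w\<in>steps m. (Pi y (y + w) - p w (normalize_st y)) *\<^sub>R Dv y (y + w))"
    by (simp add: Uf_def cv_def Dvw[symmetric] scaleR_diff_left sum_subtractf algebra_simps)
  have "norm (\<Sum>w\<in>steps m. (Pi y (y + w) - p w (normalize_st y)) *\<^sub>R Dv y (y + w))
      \<le> (\<Sum>w\<in>steps m. norm ((Pi y (y + w) - p w (normalize_st y)) *\<^sub>R Dv y (y + w)))"
    by (rule norm_sum)
  also have "\<dots> \<le> (\<Sum>w\<in>(steps m :: (int ^ 'k) set). a / N * (2 * real m))"
  proof (intro sum_mono)
    fix w :: "int ^ 'k" assume w: "w \<in> steps m"
    have h: "\<bar>Pi y (y + w) - p w (normalize_st y)\<bar> \<le> a / N"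
      using A2[OF y y0 w] by (simp add: N_def abs_minus_commute)
    have "\<bar>Pi y (y + w) - p w (normalize_st y)\<bar> * norm (Dv y (y + w)) \<le> a / N * (2 * real m)"
      by (rule mult_mono[OF h norm_Dv[OF y w]]) (use order_trans[OF abs_ge_zero h] in auto)
    then show "norm ((Pi y (y + w) - p w (normalize_st y)) *\<^sub>R Dv y (y + w)) \<le> a / N * (2 * real m)"
      by simp
  qed
  also have "\<dots> = real (card (steps m :: (int ^ 'k) set)) * (2 * real m) * a / N" by simp
  finally have s2: "norm (\<Sum>w\<in>steps m. (Pi y (y + w) - p w (normalize_st y)) *\<^sub>R Dv y (y + w))
      \<le> real (card (steps m :: (int ^ 'k) set)) * (2 * real m) * a / N" .
  have s1: "norm (real_of_int (l1norm y) *\<^sub>R (normalize_st y' - normalize_st y) - Dv y y')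
      \<le> 2 * (real m)\<^sup>2 * (real m + 1) / N"
    using geom[OF y y' y0 st] by (simp add: N_def)
  have "norm (real_of_int (l1norm y) *\<^sub>R (normalize_st y' - normalize_st y)
          - (\<Sum>w\<in>steps m. p w (normalize_st y) *\<^sub>R (rvec w - real_of_int (alpha w) *\<^sub>R normalize_st y))
          - Uf y y') \<le> 2 * (real m)\<^sup>2 * (real m + 1) / N + real (card (steps m :: (int ^ 'k) set)) * (2 * real m) * a / N"
    unfolding eq by (rule norm_triangle_le[OF add_mono[OF s1 s2]])
  also have "\<dots> = (2 * (real m)\<^sup>2 * (real m + 1) + real (card (steps m :: (int ^ 'k) set)) * (2 * real m) * a) / N"
    by (simp add: add_divide_distrib)
  finally show ?thesis by (simp add: N_def)
qed

end


theorem lemma1: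
  fixes M :: "'a measure"
    and z :: "nat \<Rightarrow> 'a \<Rightarrow> int ^ 'k"
    and Pi :: "int ^ 'k \<Rightarrow> int ^ 'k \<Rightarrow> real"
    and p :: "int ^ 'k \<Rightarrow> real ^ 'k \<Rightarrow> real"
    and m :: nat and a :: real
  assumes prob: "prob_space M"
    and meas: "\<And>n. z n \<in> M \<rightarrow>\<^sub>M count_space UNIV"
    and state: "\<And>n \<omega>. \<omega> \<in> space M \<Longrightarrow> z n \<omega> \<in> Zplus"
    and kernel: "\<And>y. y \<in> Zplus \<Longrightarrow> (\<forall>y'. 0 \<le> Pi y y') \<and> (\<forall>y'. y' \<notin> Zplus \<longrightarrow> Pi y y' = 0)
                     \<and> (Pi y has_sum 1) Zplus"
    and markov: "\<And>n A y'. A \<in> sets (gen_filtration M z n) \<Longrightarrow>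
        measure M (A \<inter> {\<omega> \<in> space M. z (Suc n) \<omega> = y'}) = (\<integral>\<omega>. indicator A \<omega> * Pi (z n \<omega>) y' \<partial>M)"
    and m_pos: "1 \<le> m"
    and A1: "\<And>n \<omega>. \<omega> \<in> space M \<Longrightarrow> l1norm (z (Suc n) \<omega> - z n \<omega>) \<le> int m"
    and p_lip: "\<And>w. w \<in> steps m \<Longrightarrow> \<exists>C. C-lipschitz_on std_simplex (p w)"
    and p_range: "\<And>w x. w \<in> steps m \<Longrightarrow> x \<in> std_simplex \<Longrightarrow> 0 \<le> p w x \<and> p w x \<le> 1"
    and a_pos: "a > 0"
    and A2: "\<And>y w. y \<in> Zplus \<Longrightarrow> y \<noteq> 0 \<Longrightarrow> w \<in> steps m \<Longrightarrow>
        \<bar>p w (normalize_st y) - Pi y (y + w)\<bar> \<le> a / real_of_int (l1norm y)"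
  shows "\<exists>(U :: nat \<Rightarrow> 'a \<Rightarrow> real ^ 'k) (b :: nat \<Rightarrow> 'a \<Rightarrow> real ^ 'k) (K :: real).
    K > 0
    \<and> (\<forall>n. U n \<in> borel_measurable (gen_filtration M z n) \<and> b n \<in> borel_measurable (gen_filtration M z n))
    \<and> (\<forall>n. \<forall>\<omega>\<in>space M. z n \<omega> \<noteq> 0 \<longrightarrow>
          normalize_st (z (Suc n) \<omega>) - normalize_st (z n \<omega>) =
          (1 / real_of_int (l1norm (z n \<omega>))) *\<^sub>R
            ((\<Sum>w\<in>steps m. p w (normalize_st (z n \<omega>)) *\<^sub>R
                 (rvec w - real_of_int (alpha w) *\<^sub>R normalize_st (z n \<omega>)))
             + U (Suc n) \<omega> + b (Suc n) \<omega>))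
    \<and> (\<forall>n i. AE \<omega> in M. real_cond_exp M (vimage_algebra (space M) (z n) (count_space UNIV))
                              (\<lambda>\<omega>. U (Suc n) \<omega> $ i) \<omega> = 0)
    \<and> (\<forall>n. \<forall>\<omega>\<in>space M. norm (U n \<omega>) \<le> 4 * real m)
    \<and> (\<forall>n. AE \<omega> in M. real_cond_exp M (gen_filtration M z n) (\<lambda>\<omega>. (norm (U (Suc n) \<omega>))\<^sup>2) \<omega> \<le> 4 * (real m)\<^sup>2)
    \<and> (\<forall>n. \<forall>\<omega>\<in>space M. norm (b (Suc n) \<omega>) \<le> K / max 1 (real_of_int (l1norm (z n \<omega>))))"
proof -
  interpret mc M z Pi m
    using prob meas state kernel markov A1 by (simp add: mc_def mc_axioms_def)
  define U :: "nat \<Rightarrow> 'a \<Rightarrow> real ^ 'k" where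
    "U n \<omega> = (case n of 0 \<Rightarrow> 0 | Suc j \<Rightarrow> Uf (z j \<omega>) (z (Suc j) \<omega>))" for n \<omega>
  define drift where "drift y = (\<Sum>w\<in>steps m. p w (normalize_st y) *\<^sub>R (rvec w - real_of_int (alpha w) *\<^sub>R normalize_st y))"
    for y :: "int ^ 'k"
  define bf where "bf y y' = (if y = 0 then 0 else
      real_of_int (l1norm y) *\<^sub>R (normalize_st y' - normalize_st y) - drift y - Uf y y')" for y y' :: "int ^ 'k"
  define b :: "nat \<Rightarrow> 'a \<Rightarrow> real ^ 'k" where
    "b n \<omega> = (case n of 0 \<Rightarrow> 0 | Suc j \<Rightarrow> bf (z j \<omega>) (z (Suc j) \<omega>))" for n \<omega>
  define K where "K = 2 * (real m)\<^sup>2 * (real m + 1) + real (card (steps m :: (int ^ 'k) set)) * (2 * real m) * a + 1"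
  have USuc: "U (Suc n) \<omega> = Uf (z n \<omega>) (z (Suc n) \<omega>)" for n \<omega> by (simp add: U_def)
  have bSuc: "b (Suc n) \<omega> = bf (z n \<omega>) (z (Suc n) \<omega>)" for n \<omega> by (simp add: b_def)
  have U0: "U 0 = (\<lambda>_. 0)" and b0: "b 0 = (\<lambda>_. 0)" by (simp_all add: fun_eq_iff U_def b_def)
  have USuc': "U (Suc n) = (\<lambda>\<omega>. Uf (z n \<omega>) (z (Suc n) \<omega>))" for n by (simp add: fun_eq_iff U_def)
  have bSuc': "b (Suc n) = (\<lambda>\<omega>. bf (z n \<omega>) (z (Suc n) \<omega>))" for n by (simp add: fun_eq_iff b_def)
  have K0: "K > 0" unfolding K_def using a_pos by (intro add_nonneg_pos mult_nonneg_nonneg) auto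
  have c1: "\<forall>n. U n \<in> borel_measurable (gen_filtration M z n) \<and> b n \<in> borel_measurable (gen_filtration M z n)"
  proof (intro allI conjI)
    fix n
    show "U n \<in> borel_measurable (gen_filtration M z n)"
    proof (cases n)
      case 0 then show ?thesis by (simp add: U0)
    next
      case (Suc j) then show ?thesis by (simp add: USuc' Uf_meas_F)
    qed
    show "b n \<in> borel_measurable (gen_filtration M z n)"
    proof (cases n)
      case 0 then show ?thesis by (simp add: b0)
    next
      case (Suc j) then show ?thesis by (simp add: bSuc' Uf_meas_F)
    qed
  qed
  have c2: "\<forall>n. \<forall>\<omega>\<in>space M. z n \<omega> \<noteq> 0 \<longrightarrow>
          normalize_st (z (Suc n) \<omega>) - normalize_st (z n \<omega>) =
          (1 / real_of_int (l1norm (z n \<omega>))) *\<^sub>R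
            ((\<Sum>w\<in>steps m. p w (normalize_st (z n \<omega>)) *\<^sub>R
                 (rvec w - real_of_int (alpha w) *\<^sub>R normalize_st (z n \<omega>)))
             + U (Suc n) \<omega> + b (Suc n) \<omega>)"
  proof (intro allI ballI impI)
    fix n \<omega> assume \<omega>: "\<omega> \<in> space M" and nz: "z n \<omega> \<noteq> 0"
    have N0: "real_of_int (l1norm (z n \<omega>)) \<noteq> 0" using l1_pos[OF state[OF \<omega>] nz] by simp
    show "normalize_st (z (Suc n) \<omega>) - normalize_st (z n \<omega>) =
          (1 / real_of_int (l1norm (z n \<omega>))) *\<^sub>R
            ((\<Sum>w\<in>steps m. p w (normalize_st (z n \<omega>)) *\<^sub>R
                 (rvec w - real_of_int (alpha w) *\<^sub>R normalize_st (z n \<omega>)))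
             + U (Suc n) \<omega> + b (Suc n) \<omega>)"
      using N0 by (simp add: USuc bSuc bf_def nz drift_def[symmetric])
  qed
  have c3: "\<forall>n i. AE \<omega> in M. real_cond_exp M (vimage_algebra (space M) (z n) (count_space UNIV))
                              (\<lambda>\<omega>. U (Suc n) \<omega> $ i) \<omega> = 0"
    using condexp_U by (simp add: USuc V_def)
  have c4: "\<forall>n. \<forall>\<omega>\<in>space M. norm (U n \<omega>) \<le> 4 * real m"
  proof (intro allI ballI)
    fix n \<omega> assume \<omega>: "\<omega> \<in> space M"
    show "norm (U n \<omega>) \<le> 4 * real m"
    proof (cases n)
      case 0 then show ?thesis by (simp add: U_def)
    next
      case (Suc j)
      have "norm (Uf (z j \<omega>) (z j \<omega> + (z (Suc j) \<omega> - z j \<omega>))) \<le> 4 * real m"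
        by (rule Uf_bd[OF state[OF \<omega>] step_in[OF \<omega>]])
      then show ?thesis by (simp add: Suc USuc)
    qed
  qed
  have c5: "\<forall>n. AE \<omega> in M. real_cond_exp M (gen_filtration M z n) (\<lambda>\<omega>. (norm (U (Suc n) \<omega>))\<^sup>2) \<omega> \<le> 4 * (real m)\<^sup>2"
    using condexp_U2 by (simp add: USuc)
  have c6: "\<forall>n. \<forall>\<omega>\<in>space M. norm (b (Suc n) \<omega>) \<le> K / max 1 (real_of_int (l1norm (z n \<omega>)))"
  proof (intro allI ballI)
    fix n \<omega> assume \<omega>: "\<omega> \<in> space M"
    show "norm (b (Suc n) \<omega>) \<le> K / max 1 (real_of_int (l1norm (z n \<omega>)))"
    proof (cases "z n \<omega> = 0")
      case True
      then show ?thesis using K0 by (simp add: bSuc bf_def)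
    next
      case False
      have y: "z n \<omega> \<in> Zplus" using state[OF \<omega>] .
      have Np: "1 \<le> real_of_int (l1norm (z n \<omega>))" using l1_pos[OF y False] by simp
      have "norm (b (Suc n) \<omega>) \<le> (K - 1) / real_of_int (l1norm (z n \<omega>))"
        using b_bd[of p a, OF A2 y False state[OF \<omega>] step_in[OF \<omega>]]
        by (simp add: bSuc bf_def False drift_def K_def)
      also have "\<dots> \<le> K / real_of_int (l1norm (z n \<omega>))"
        using Np by (intro divide_right_mono) auto
      also have "\<dots> = K / max 1 (real_of_int (l1norm (z n \<omega>)))" using Np by simp
      finally show ?thesis .
    qed
  qed
  show ?thesis
    by (rule exI[of _ U], rule exI[of _ b], rule exI[of _ K]) (intro conjI K0 c1 c2 c3 c4 c5 c6)
qed

end
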